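(* Work in Scenario 2 with a common prior. For a mechanism $(\mathbf x,\mathbf p)$, bidder $i$ and $\hat t_i\in T_i$, let $y_i(\hat t_i)=\mathbb E_{\mathbf t_{-i}}[x_i(\hat t_i,\mathbf t_{-i})]$, $q_i(\hat t_i)=\mathbb E_{\mathbf t_{-i}}[p_i(\hat t_i,\mathbf t_{-i})]$ and $e_i(\hat t_i)=\sum_{j\ne i}\mathbb E_{\mathbf t_{-i}}[\eta_{i\leftarrow j}\,x_j(\hat t_i,\mathbf t_{-i})]$ (here $\eta_{i\leftarrow j}$ is a coordinate of $t_j$), so that $V_i(\hat t_i;t_i)=v_iy_i(\hat t_i)-e_i(\hat t_i)-q_i(\hat t_i)$. (a) If $(\mathbf x,\mathbf p)$ is BNIC then for each $i\in N$: there is a non-decreasing $\tilde y_i:[\underline v_i,\bar v_i]\to[0,1]$ such that $y_i(v_i,\boldsymbol\eta)=\tilde y_i(v_i)$ for all $\boldsymbol\eta\in\prod_{j\ne i}[\underline\eta_{j\leftarrow i},\bar\eta_{j\leftarrow i}]$ and all but countably many $v_i$; $V_i(t_i;t_i)$ depends only on $v_i$, say $V_i(t_i;t_i)=\widetilde V_i(v_i)$; and for every $t_i=(v_i,\boldsymbol\eta)\in T_i$, $$q_i(t_i)=v_i\,y_i(t_i)-\int_{\underline v_i}^{v_i}\tilde y_i(v)\,dv-e_i(t_i)-\widetilde V_i(\underline v_i).$$ (b) Conversely, if for each $i$ there are a non-decreasing $\tilde y_i:[\underline v_i,\bar v_i]\to[0,1]$ with $y_i(v_i,\boldsymbol\eta)=\tilde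 y_i(v_i)$ for all $(v_i,\boldsymbol\eta)\in T_i$, and a constant $C_i$ with $q_i(t_i)=v_i\tilde y_i(v_i)-\int_{\underline v_i}^{v_i}\tilde y_i(v)\,dv-e_i(t_i)-C_i$ for all $t_i\in T_i$, then $(\mathbf x,\mathbf p)$ is BNIC.
   Context: Model: there are $n$ bidders $N=\{1,\dots,n\}$ and a seller of a freely replicable good; an allocation is any $\mathbf x\in[0,1]^n$. Bidder $i$ has value $v_i\in[\underline v_i,\bar v_i]\subset\mathbb R_{\ge0}$ and for $j\ne i$ parameters $\eta_{i\leftarrow j}\in[\underline\eta_{i\leftarrow j},\bar\eta_{i\leftarrow j}]\subset\mathbb R_{\ge0}$; valuation $\nu_i(\mathbf x)=v_ix_i-\sum_{j\ne i}\eta_{i\leftarrow j}x_j$, utility $\nu_i(\mathbf x)-p_i$. In Scenario 2, bidder $i$'s private type is $t_i=(v_i,(\eta_{j\leftarrow i})_{j\ne i})\in T_i=[\underline v_i,\bar v_i]\times\prod_{j\ne i}[\underline\eta_{j\leftarrow i},\bar\eta_{j\leftarrow i}]$. Bids lie in $B_i=T_i\cup\{\emptyset\}$; a mechanism is $\mathbf x:B\to[0,1]^n$, $\mathbf p:B\to\mathbb R^n_{\ge0}$ with $x_i=p_i=0$ when $i$ bids $\emptyset$. Common prior: types $t_i\sim F_i$ independent across bidders; $\mathbb E_{\mathbf t_{-i}}$ is expectation over $\mathbf t_{-i}\sim\prod_{j\ne i}F_j$. Interim utility: $V_i(\hat t_i;t_i)=\mathbb E[u_i(\mathbf x(\hat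 t_i,\mathbf t_{-i}),p_i(\hat t_i,\mathbf t_{-i});\mathbf t)\mid t_i]$ (others truthful). BNIC: $V_i(t_i;t_i)\ge V_i(\hat t_i;t_i)$ for all $i$ and $t_i,\hat t_i\in T_i$. *)

theory Defs
  imports "HOL-Probability.Probability"
begin

text \<open>A type of bidder i is a pair (v, eta)
 where v is the value v_i and eta j = eta_{j<-i} for j in N - {i}
 (extensional: eta j = undefined outside N - {i}).
 A type profile is a function nat => btype (only the values on N matter).
 Bounds: vl i, vh i for v_i; el j i, eh j i for eta_{j<-i}.\<close>

type_synonym btype = "real \<times> (nat \<Rightarrow> real)"
type_synonym profile = "nat \<Rightarrow> btype"

definition Eta_set :: "nat \<Rightarrow> (nat \<Rightarrow> nat \<Rightarrow> real) \<Rightarrow> (nat \<Rightarrow> nat \<Rightarrow> real) \<Rightarrow> nat \<Rightarrow> (nat \<Rightarrow> real) set" where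
  "Eta_set n el eh i = (\<Pi>\<^sub>E j\<in>{..<n} - {i}. {el j i .. eh j i})"

definition type_set :: "nat \<Rightarrow> (nat \<Rightarrow> real) \<Rightarrow> (nat \<Rightarrow> real) \<Rightarrow> (nat \<Rightarrow> nat \<Rightarrow> real) \<Rightarrow> (nat \<Rightarrow> nat \<Rightarrow> real) \<Rightarrow> nat \<Rightarrow> btype set" where
  "type_set n vl vh el eh i = {vl i .. vh i} \<times> Eta_set n el eh i"

definition Eoth :: "nat \<Rightarrow> (nat \<Rightarrow> btype measure) \<Rightarrow> nat \<Rightarrow> (profile \<Rightarrow> real) \<Rightarrow> btype \<Rightarrow> real" where
  "Eoth n F i f th = (\<integral>s. f (s(i := th)) \<partial>(PiM ({..<n} - {i}) F))"

text \<open>Interim utility V_i(th; t) of bidder i with true type t reporting th, others truthful.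
 The utility is v_i x_i - sum_{j<>i} eta_{i<-j} x_j - p_i, where eta_{i<-j} = snd (t_j) i.\<close>
definition interim_util :: "nat \<Rightarrow> (nat \<Rightarrow> btype measure) \<Rightarrow> (profile \<Rightarrow> nat \<Rightarrow> real) \<Rightarrow> (profile \<Rightarrow> nat \<Rightarrow> real) \<Rightarrow> nat \<Rightarrow> btype \<Rightarrow> btype \<Rightarrow> real" where
  "interim_util n F x p i th t =
     Eoth n F i (\<lambda>s. fst t * x s i - (\<Sum>j\<in>{..<n} - {i}. snd (s j) i * x s j) - p s i) th"

definition BNIC :: "nat \<Rightarrow> (nat \<Rightarrow> real) \<Rightarrow> (nat \<Rightarrow> real) \<Rightarrow> (nat \<Rightarrow> nat \<Rightarrow> real) \<Rightarrow> (nat \<Rightarrow> nat \<Rightarrow> real) \<Rightarrow> (nat \<Rightarrow> btype measure) \<Rightarrow> (profile \<Rightarrow> nat \<Rightarrow> real) \<Rightarrow> (profile \<Rightarrow> nat \<Rightarrow> real) \<Rightarrow> bool" where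
  "BNIC n vl vh el eh F x p \<longleftrightarrow>
     (\<forall>i\<in>{..<n}. \<forall>t\<in>type_set n vl vh el eh i. \<forall>th\<in>type_set n vl vh el eh i.
        interim_util n F x p i th t \<le> interim_util n F x p i t t)"

definition yexp :: "nat \<Rightarrow> (nat \<Rightarrow> btype measure) \<Rightarrow> (profile \<Rightarrow> nat \<Rightarrow> real) \<Rightarrow> nat \<Rightarrow> btype \<Rightarrow> real" where
  "yexp n F x i th = Eoth n F i (\<lambda>s. x s i) th"

definition qexp :: "nat \<Rightarrow> (nat \<Rightarrow> btype measure) \<Rightarrow> (profile \<Rightarrow> nat \<Rightarrow> real) \<Rightarrow> nat \<Rightarrow> btype \<Rightarrow> real" where
  "qexp n F p i th = Eoth n F i (\<lambda>s. p s i) th"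

definition eexp :: "nat \<Rightarrow> (nat \<Rightarrow> btype measure) \<Rightarrow> (profile \<Rightarrow> nat \<Rightarrow> real) \<Rightarrow> nat \<Rightarrow> btype \<Rightarrow> real" where
  "eexp n F x i th = (\<Sum>j\<in>{..<n} - {i}. Eoth n F i (\<lambda>s. snd (s j) i * x s j) th)"

end

theory Submission
  imports Defs
begin


lemma mono_int_bounds:
  fixes g :: "real \<Rightarrow> real"
  assumes m: "mono_on {a..b} g" and av: "a \<le> v" and vw: "v \<le> w" and wb: "w \<le> b"
  shows "(w - v) * g v \<le> integral {a..w} g - integral {a..v} g"
    and "integral {a..w} g - integral {a..v} g \<le> (w - v) * g w"
proof -
  have iw: "g integrable_on {a..w}"
    using av vw wb by (intro integrable_on_mono_on mono_on_subset[OF m]) auto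
  have e: "integral {a..w} g - integral {a..v} g = integral {v..w} g"
    using Henstock_Kurzweil_Integration.integral_combine[OF av vw iw] by simp
  have ivw: "g integrable_on {v..w}"
    using av vw wb by (intro integrable_on_mono_on mono_on_subset[OF m]) auto
  have "integral {v..w} (\<lambda>_. g v) \<le> integral {v..w} g"
    by (rule integral_le[OF _ ivw]) (use av vw wb in \<open>auto intro!: mono_onD[OF m]\<close>)
  then show "(w - v) * g v \<le> integral {a..w} g - integral {a..v} g"
    using e vw by (simp add: content_real)
  have "integral {v..w} g \<le> integral {v..w} (\<lambda>_. g w)"
    by (rule integral_le[OF ivw]) (use av vw wb in \<open>auto intro!: mono_onD[OF m]\<close>)
  then show "integral {a..w} g - integral {a..v} g \<le> (w - v) * g w"
    using e vw by (simp add: content_real)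
qed

lemma const_from_bound:
  fixes H g :: "real \<Rightarrow> real"
  assumes m: "mono_on {a..b} g"
    and hb: "\<And>v w. a \<le> v \<Longrightarrow> v \<le> w \<Longrightarrow> w \<le> b \<Longrightarrow> \<bar>H w - H v\<bar> \<le> (w - v) * (g w - g v)"
    and av: "a \<le> v" and vw: "v \<le> w" and wb: "w \<le> b"
  shows "H w = H v"
proof -
  have gle: "g v \<le> g w" using mono_onD[OF m] av vw wb by auto
  have key: "\<bar>H w - H v\<bar> * real m \<le> (w - v) * (g w - g v)" if "m > 0" for m :: nat
  proof -
    define h where "h = (w - v) / real m"
    have h0: "h \<ge> 0" using vw that by (simp add: h_def)
    have hm: "v + real m * h = w" using that by (simp add: h_def)
    have "k \<le> m \<longrightarrow> \<bar>H (v + real k * h) - H v\<bar> \<le> h * (g (v + real k * h) - g v)" for k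
    proof (induction k)
      case 0 then show ?case by simp
    next
      case (Suc k)
      show ?case
      proof
        assume km: "Suc k \<le> m"
        have p1: "v \<le> v + real k * h" using h0 by simp
        have p2: "v + real k * h \<le> v + real (Suc k) * h" using h0 by (simp add: algebra_simps)
        have "v + real (Suc k) * h \<le> v + real m * h"
          using km h0 by (intro add_left_mono mult_right_mono) auto
        then have p3: "v + real (Suc k) * h \<le> b" using hm wb by simp
        have d: "v + real (Suc k) * h - (v + real k * h) = h" by (simp add: algebra_simps)
        have IH: "\<bar>H (v + real k * h) - H v\<bar> \<le> h * (g (v + real k * h) - g v)"
          using Suc.IH km by simp
        have st: "\<bar>H (v + real (Suc k) * h) - H (v + real k * h)\<bar>
              \<le> h * (g (v + real (Suc k) * h) - g (v + real k * h))"
          using hb[OF _ p2 p3] av p1 d by simp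
        have "\<bar>H (v + real (Suc k) * h) - H v\<bar> \<le>
            \<bar>H (v + real (Suc k) * h) - H (v + real k * h)\<bar> + \<bar>H (v + real k * h) - H v\<bar>"
          by linarith
        also have "\<dots> \<le> h * (g (v + real (Suc k) * h) - g v)"
          using IH st by (simp add: algebra_simps)
        finally show "\<bar>H (v + real (Suc k) * h) - H v\<bar> \<le> h * (g (v + real (Suc k) * h) - g v)" .
      qed
    qed
    from this[of m] have "\<bar>H w - H v\<bar> \<le> h * (g w - g v)" using hm by simp
    then have "\<bar>H w - H v\<bar> * real m \<le> (h * (g w - g v)) * real m"
      by (rule mult_right_mono) simp
    moreover have "(h * (g w - g v)) * real m = (h * real m) * (g w - g v)" by (simp add: algebra_simps)
    moreover have "h * real m = w - v" using that by (simp add: h_def)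
    ultimately show ?thesis by simp
  qed
  show ?thesis
  proof (rule ccontr)
    assume "H w \<noteq> H v"
    then have pos: "\<bar>H w - H v\<bar> > 0" by simp
    obtain m :: nat where mgt: "real m > (w - v) * (g w - g v) / \<bar>H w - H v\<bar>"
      using reals_Archimedean2 by blast
    then have m0: "m > 0"
      using pos gle vw by (metis divide_nonneg_pos mult_nonneg_nonneg diff_ge_0_iff_ge not_less of_nat_0 gr0I)
    have "(w - v) * (g w - g v) < real m * \<bar>H w - H v\<bar>"
      using mgt pos by (simp add: divide_less_eq)
    with key[OF m0] show False by (simp add: mult.commute)
  qed
qed

lemma subsingleton_countable: "(\<And>v w. v \<in> S \<Longrightarrow> w \<in> S \<Longrightarrow> v = w) \<Longrightarrow> countable S"
proof (cases "S = {}")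
  case False
  assume h: "\<And>v w. v \<in> S \<Longrightarrow> w \<in> S \<Longrightarrow> v = w"
  then obtain v0 where "v0 \<in> S" using False by blast
  then have "S \<subseteq> {v0}" using h by blast
  then show ?thesis using countable_subset by blast
qed simp

lemma myerson_abstract:
  fixes Y :: "real \<Rightarrow> 'e \<Rightarrow> real" and U :: "real \<Rightarrow> real"
  assumes e0: "e0 \<in> E"
    and sub: "\<And>v w e. v \<in> {a..b} \<Longrightarrow> w \<in> {a..b} \<Longrightarrow> e \<in> E \<Longrightarrow> U v + (w - v) * Y v e \<le> U w"
  shows "mono_on {a..b} (\<lambda>v. Y v e0)"
    and "\<exists>C. countable C \<and> (\<forall>v\<in>{a..b} - C. \<forall>e\<in>E. Y v e = Y v e0)"
    and "\<And>v. v \<in> {a..b} \<Longrightarrow> U v = U a + integral {a..v} (\<lambda>v. Y v e0)"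
proof -
  have mix: "Y v e \<le> Y w e'" if "v \<in> {a..b}" "w \<in> {a..b}" "v < w" "e \<in> E" "e' \<in> E" for v w e e'
  proof -
    have "U v + (w - v) * Y v e \<le> U w" using sub that by blast
    moreover have "U w + (v - w) * Y w e' \<le> U v" using sub that by blast
    ultimately have "(w - v) * (Y v e - Y w e') \<le> 0" by (simp add: algebra_simps)
    then show ?thesis using that(3) by (simp add: mult_le_0_iff)
  qed
  show m: "mono_on {a..b} (\<lambda>v. Y v e0)"
    by (rule mono_onI) (metis mix e0 order.order_iff_strict order_refl)
  show "\<exists>C. countable C \<and> (\<forall>v\<in>{a..b} - C. \<forall>e\<in>E. Y v e = Y v e0)"
  proof (intro exI conjI)
    let ?C = "{v\<in>{a..b}. \<exists>e\<in>E. Y v e \<noteq> Y v e0}"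
    let ?S = "\<lambda>r. {v\<in>{a..b}. \<exists>e\<in>E. \<exists>e'\<in>E. Y v e < r \<and> r < Y v e'}"
    have "?C \<subseteq> (\<Union>r\<in>\<rat>. ?S r)"
    proof
      fix v assume "v \<in> ?C"
      then obtain e where v: "v \<in> {a..b}" "e \<in> E" "Y v e \<noteq> Y v e0" by blast
      show "v \<in> (\<Union>r\<in>\<rat>. ?S r)"
      proof (cases "Y v e < Y v e0")
        case True
        then obtain r where "r \<in> \<rat>" "Y v e < r" "r < Y v e0" using Rats_dense_in_real by blast
        then show ?thesis using v e0 by blast
      next
        case False
        then have "Y v e0 < Y v e" using v by simp
        then obtain r where "r \<in> \<rat>" "Y v e0 < r" "r < Y v e" using Rats_dense_in_real by blast
        then show ?thesis using v e0 by blast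
      qed
    qed
    moreover have "countable (\<Union>r\<in>\<rat>. ?S r)"
    proof (rule countable_UN[OF countable_rat])
      fix r
      show "countable (?S r)"
      proof (rule subsingleton_countable)
        fix v w assume "v \<in> ?S r" "w \<in> ?S r"
        then obtain e1 e1' e2 e2' where h: "v \<in> {a..b}" "w \<in> {a..b}" "e1 \<in> E" "e1' \<in> E" "e2 \<in> E" "e2' \<in> E"
          "Y v e1 < r" "r < Y v e1'" "Y w e2 < r" "r < Y w e2'" by blast
        show "v = w"
        proof (rule ccontr)
          assume "v \<noteq> w"
          then consider "v < w" | "w < v" by linarith
          then show False
          proof cases
            case 1 then show False using mix[of v w e1' e2] h by linarith
          next
            case 2 then show False using mix[of w v e2' e1] h by linarith
          qed
        qed
      qed
    qed
    ultimately show "countable ?C" using countable_subset by blast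
    show "\<forall>v\<in>{a..b} - ?C. \<forall>e\<in>E. Y v e = Y v e0" by blast
  qed
  fix v assume v: "v \<in> {a..b}"
  define H where "H v = U v - U a - integral {a..v} (\<lambda>v. Y v e0)" for v
  have hb: "\<bar>H w - H u\<bar> \<le> (w - u) * (Y w e0 - Y u e0)" if "a \<le> u" "u \<le> w" "w \<le> b" for u w
  proof -
    have b1: "(w - u) * Y u e0 \<le> integral {a..w} (\<lambda>v. Y v e0) - integral {a..u} (\<lambda>v. Y v e0)"
      and b2: "integral {a..w} (\<lambda>v. Y v e0) - integral {a..u} (\<lambda>v. Y v e0) \<le> (w - u) * Y w e0"
      using mono_int_bounds[OF m that] by auto
    have c1: "U u + (w - u) * Y u e0 \<le> U w" using sub[of u w e0] that e0 by auto
    have c2: "U w + (u - w) * Y w e0 \<le> U u" using sub[of w u e0] that e0 by auto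
    show ?thesis unfolding H_def using b1 b2 c1 c2 by (simp add: algebra_simps abs_le_iff)
  qed
  have "H v = H a" using const_from_bound[OF m hb, of a v] v by auto
  then show "U v = U a + integral {a..v} (\<lambda>v. Y v e0)" by (simp add: H_def)
qed




lemma interim_lin:
  fixes n :: nat and i :: nat and F :: "nat \<Rightarrow> btype measure" and x p :: "profile \<Rightarrow> nat \<Rightarrow> real"
  assumes i: "i < n"
    and bounds_eta: "\<And>i j. i < n \<Longrightarrow> j < n \<Longrightarrow> j \<noteq> i \<Longrightarrow> 0 \<le> el j i \<and> el j i \<le> eh j i"
    and prior: "\<And>i. i < n \<Longrightarrow> prob_space (F i)"
    and prior_space: "\<And>i. i < n \<Longrightarrow> space (F i) = type_set n vl vh el eh i"
    and eta_meas: "\<And>i j. i < n \<Longrightarrow> j < n \<Longrightarrow> j \<noteq> i \<Longrightarrow> (\<lambda>t. snd t j) \<in> borel_measurable (F i)"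
    and x_range: "\<And>t i. i < n \<Longrightarrow> 0 \<le> x t i \<and> x t i \<le> 1"
    and x_meas: "\<And>i j th. i < n \<Longrightarrow> j < n \<Longrightarrow> th \<in> type_set n vl vh el eh i \<Longrightarrow>
        (\<lambda>s. x (s(i := th)) j) \<in> borel_measurable (PiM ({..<n} - {i}) F)"
    and p_integrable: "\<And>i th. i < n \<Longrightarrow> th \<in> type_set n vl vh el eh i \<Longrightarrow>
        integrable (PiM ({..<n} - {i}) F) (\<lambda>s. p (s(i := th)) i)"
    and th: "th \<in> type_set n vl vh el eh i"
  shows "interim_util n F x p i th t = fst t * yexp n F x i th - eexp n F x i th - qexp n F p i th"
    and "0 \<le> yexp n F x i th \<and> yexp n F x i th \<le> 1"
proof -
  let ?M = "PiM ({..<n} - {i}) F"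
  interpret M: prob_space ?M by (rule prob_space_PiM) (use prior in auto)
  have I1: "integrable ?M (\<lambda>s. x (s(i:=th)) i)"
    by (rule M.integrable_const_bound[where B=1]) (use x_range i x_meas[OF i i th] in auto)
  have I2: "integrable ?M (\<lambda>s. snd ((s(i:=th)) j) i * x (s(i:=th)) j)" if j: "j \<in> {..<n} - {i}" for j
  proof -
    have eq: "(\<lambda>s. snd ((s(i:=th)) j) i * x (s(i:=th)) j) = (\<lambda>s. snd (s j) i * x (s(i:=th)) j)"
      using j by auto
    have m1: "(\<lambda>s. snd (s j) i) \<in> borel_measurable ?M"
      using measurable_compose[OF measurable_component_singleton[of j "{..<n} - {i}" F] eta_meas[of j i]] j i
      by auto
    have m2: "(\<lambda>s. x (s(i:=th)) j) \<in> borel_measurable ?M" using x_meas[OF i _ th] j by auto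
    have bd: "\<forall>s\<in>space ?M. norm (snd (s j) i * x (s(i:=th)) j) \<le> eh i j"
    proof
      fix s assume s: "s \<in> space ?M"
      then have "s j \<in> space (F j)" using j by (auto simp: space_PiM)
      then have "s j \<in> type_set n vl vh el eh j" using prior_space j by auto
      then have "snd (s j) \<in> Eta_set n el eh j" by (auto simp: type_set_def)
      moreover have "i \<in> {..<n} - {j}" using j i by auto
      ultimately have c1: "snd (s j) i \<in> {el i j .. eh i j}" unfolding Eta_set_def by (rule PiE_mem)
      have c2: "el i j \<ge> 0" using bounds_eta[of j i] j i by auto
      have c3: "0 \<le> x (s(i:=th)) j \<and> x (s(i:=th)) j \<le> 1" using x_range j by auto
      show "norm (snd (s j) i * x (s(i:=th)) j) \<le> eh i j"
      proof -
        have a: "0 \<le> snd (s j) i" "snd (s j) i \<le> eh i j" using c1 c2 c3 by auto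
        have "snd (s j) i * x (s(i:=th)) j \<le> snd (s j) i * 1"
          by (rule mult_left_mono) (use c1 c2 c3 in auto)
        moreover have "0 \<le> snd (s j) i * x (s(i:=th)) j" using a c1 c2 c3 by simp
        ultimately show ?thesis using a by simp
      qed
    qed
    show ?thesis unfolding eq
      by (rule M.integrable_const_bound[where B="eh i j"]) (use bd m1 m2 in auto)
  qed
  have I3: "integrable ?M (\<lambda>s. p (s(i := th)) i)" using p_integrable[OF i th] .
  have IS: "integrable ?M (\<lambda>s. \<Sum>j\<in>{..<n} - {i}. snd ((s(i:=th)) j) i * x (s(i:=th)) j)"
    using I2 by (intro Bochner_Integration.integrable_sum) blast
  show "interim_util n F x p i th t = fst t * yexp n F x i th - eexp n F x i th - qexp n F p i th"
  proof -
    let ?f = "\<lambda>s. fst t * x (s(i:=th)) i"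
    let ?S = "\<lambda>s. \<Sum>j\<in>{..<n} - {i}. snd ((s(i:=th)) j) i * x (s(i:=th)) j"
    let ?P = "\<lambda>s. p (s(i := th)) i"
    have If: "integrable ?M ?f" using I1 by simp
    have "interim_util n F x p i th t = (\<integral>s. ?f s - ?S s - ?P s \<partial>?M)"
      unfolding interim_util_def Eoth_def by simp
    also have "\<dots> = (\<integral>s. ?f s - ?S s \<partial>?M) - (\<integral>s. ?P s \<partial>?M)"
      by (rule Bochner_Integration.integral_diff) (use If IS I3 in auto)
    also have "(\<integral>s. ?f s - ?S s \<partial>?M) = (\<integral>s. ?f s \<partial>?M) - (\<integral>s. ?S s \<partial>?M)"
      by (rule Bochner_Integration.integral_diff) (use If IS in auto)
    also have "(\<integral>s. ?S s \<partial>?M) = eexp n F x i th"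
      unfolding eexp_def Eoth_def using I2 by (intro Bochner_Integration.integral_sum) blast
    also have "(\<integral>s. ?f s \<partial>?M) = fst t * yexp n F x i th"
      unfolding yexp_def Eoth_def by simp
    also have "(\<integral>s. ?P s \<partial>?M) = qexp n F p i th"
      unfolding qexp_def Eoth_def by simp
    finally show ?thesis .
  qed
  have "0 \<le> yexp n F x i th" unfolding yexp_def Eoth_def
    by (rule integral_nonneg_AE) (use x_range i in auto)
  moreover have "yexp n F x i th \<le> 1"
  proof -
    have "(\<integral>s. x (s(i:=th)) i \<partial>?M) \<le> (\<integral>s. 1 \<partial>?M)"
      by (rule integral_mono[OF I1]) (use x_range i in auto)
    then show ?thesis unfolding yexp_def Eoth_def by (simp add: M.prob_space)
  qed
  ultimately show "0 \<le> yexp n F x i th \<and> yexp n F x i th \<le> 1" by simp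
qed



theorem mainTheorem8:
  fixes n :: nat
    and vl vh :: "nat \<Rightarrow> real"
    and el eh :: "nat \<Rightarrow> nat \<Rightarrow> real"
    and F :: "nat \<Rightarrow> btype measure"
    and x p :: "profile \<Rightarrow> nat \<Rightarrow> real"
  assumes bounds_v: "\<And>i. i < n \<Longrightarrow> 0 \<le> vl i \<and> vl i \<le> vh i"
    and bounds_eta: "\<And>i j. i < n \<Longrightarrow> j < n \<Longrightarrow> j \<noteq> i \<Longrightarrow> 0 \<le> el j i \<and> el j i \<le> eh j i"
    and prior: "\<And>i. i < n \<Longrightarrow> prob_space (F i)"
    and prior_space: "\<And>i. i < n \<Longrightarrow> space (F i) = type_set n vl vh el eh i"
    and eta_meas: "\<And>i j. i < n \<Longrightarrow> j < n \<Longrightarrow> j \<noteq> i \<Longrightarrow> (\<lambda>t. snd t j) \<in> borel_measurable (F i)"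
    and x_range: "\<And>t i. i < n \<Longrightarrow> 0 \<le> x t i \<and> x t i \<le> 1"
    and p_nonneg: "\<And>t i. i < n \<Longrightarrow> 0 \<le> p t i"
    and x_meas: "\<And>i j th. i < n \<Longrightarrow> j < n \<Longrightarrow> th \<in> type_set n vl vh el eh i \<Longrightarrow>
        (\<lambda>s. x (s(i := th)) j) \<in> borel_measurable (PiM ({..<n} - {i}) F)"
    and p_integrable: "\<And>i th. i < n \<Longrightarrow> th \<in> type_set n vl vh el eh i \<Longrightarrow>
        integrable (PiM ({..<n} - {i}) F) (\<lambda>s. p (s(i := th)) i)"
  shows
    "(BNIC n vl vh el eh F x p \<longrightarrow>
       (\<forall>i<n. \<exists>ytil Vtil.
          mono_on {vl i .. vh i} ytil \<and>
          (\<forall>v\<in>{vl i .. vh i}. 0 \<le> ytil v \<and> ytil v \<le> 1) \<and>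
          (\<exists>C. countable C \<and>
             (\<forall>v\<in>{vl i .. vh i} - C. \<forall>eta\<in>Eta_set n el eh i. yexp n F x i (v, eta) = ytil v)) \<and>
          (\<forall>t\<in>type_set n vl vh el eh i. interim_util n F x p i t t = Vtil (fst t)) \<and>
          (\<forall>t\<in>type_set n vl vh el eh i.
             qexp n F p i t = fst t * yexp n F x i t - integral {vl i .. fst t} ytil
                              - eexp n F x i t - Vtil (vl i)))) \<and>
     ((\<forall>i<n. \<exists>ytil C.
          mono_on {vl i .. vh i} ytil \<and>
          (\<forall>v\<in>{vl i .. vh i}. 0 \<le> ytil v \<and> ytil v \<le> 1) \<and>
          (\<forall>t\<in>type_set n vl vh el eh i. yexp n F x i t = ytil (fst t)) \<and>
          (\<forall>t\<in>type_set n vl vh el eh i.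
             qexp n F p i t = fst t * ytil (fst t) - integral {vl i .. fst t} ytil
                              - eexp n F x i t - C))
      \<longrightarrow> BNIC n vl vh el eh F x p)"
  
proof (intro conjI impI)
  have lin: "interim_util n F x p i th t = fst t * yexp n F x i th - eexp n F x i th - qexp n F p i th"
    and yr: "0 \<le> yexp n F x i th \<and> yexp n F x i th \<le> 1"
    if "i < n" "th \<in> type_set n vl vh el eh i" for i th t
    using interim_lin[OF that(1) bounds_eta prior prior_space eta_meas x_range x_meas p_integrable that(2)]
    by auto
  have dep: "interim_util n F x p i th t = interim_util n F x p i th t'" if "fst t = fst t'" for i th t t'
    unfolding interim_util_def using that by simp
  have memT: "(v, e) \<in> type_set n vl vh el eh i \<longleftrightarrow> v \<in> {vl i .. vh i} \<and> e \<in> Eta_set n el eh i" for i v e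
    by (simp add: type_set_def)
  {
    assume bn: "BNIC n vl vh el eh F x p"
    show "\<forall>i<n. \<exists>ytil Vtil.
          mono_on {vl i .. vh i} ytil \<and>
          (\<forall>v\<in>{vl i .. vh i}. 0 \<le> ytil v \<and> ytil v \<le> 1) \<and>
          (\<exists>C. countable C \<and>
             (\<forall>v\<in>{vl i .. vh i} - C. \<forall>eta\<in>Eta_set n el eh i. yexp n F x i (v, eta) = ytil v)) \<and>
          (\<forall>t\<in>type_set n vl vh el eh i. interim_util n F x p i t t = Vtil (fst t)) \<and>
          (\<forall>t\<in>type_set n vl vh el eh i.
             qexp n F p i t = fst t * yexp n F x i t - integral {vl i .. fst t} ytil
                              - eexp n F x i t - Vtil (vl i))"
    proof (intro allI impI)
      fix i assume i: "i < n"
      let ?T = "type_set n vl vh el eh i"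
      let ?E = "Eta_set n el eh i"
      define e0 where "e0 = (\<lambda>j\<in>{..<n} - {i}. el j i)"
      have e0E: "e0 \<in> ?E" unfolding e0_def Eta_set_def using bounds_eta i by auto
      have BN: "interim_util n F x p i th t \<le> interim_util n F x p i t t" if "t \<in> ?T" "th \<in> ?T" for t th
        using bn that i unfolding BNIC_def by auto
      have Wc: "interim_util n F x p i t t = interim_util n F x p i t' t'"
        if "t \<in> ?T" "t' \<in> ?T" "fst t = fst t'" for t t'
      proof -
        have "interim_util n F x p i t' t' = interim_util n F x p i t' t" using dep that(3) by metis
        also have "\<dots> \<le> interim_util n F x p i t t" using BN that by blast
        finally have 1: "interim_util n F x p i t' t' \<le> interim_util n F x p i t t" .
        have "interim_util n F x p i t t = interim_util n F x p i t t'" using dep that(3) by metis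
        also have "\<dots> \<le> interim_util n F x p i t' t'" using BN that by blast
        finally show ?thesis using 1 by simp
      qed
      define U where "U v = interim_util n F x p i (v, e0) (v, e0)" for v
      define Y where "Y v e = yexp n F x i (v, e)" for v e
      have sub: "U v + (w - v) * Y v e \<le> U w"
        if "v \<in> {vl i..vh i}" "w \<in> {vl i..vh i}" "e \<in> ?E" for v w e
      proof -
        have t1: "(v, e) \<in> ?T" "(w, e0) \<in> ?T" "(v, e0) \<in> ?T" using that e0E memT by auto
        have "U v = interim_util n F x p i (v, e) (v, e)" unfolding U_def using Wc[OF t1(3) t1(1)] by simp
        also have "\<dots> = v * Y v e - eexp n F x i (v, e) - qexp n F p i (v, e)"
          using lin[OF i t1(1)] by (simp add: Y_def)
        finally have a: "U v = v * Y v e - eexp n F x i (v, e) - qexp n F p i (v, e)" .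
        have "interim_util n F x p i (v, e) (w, e0) = w * Y v e - eexp n F x i (v, e) - qexp n F p i (v, e)"
          using lin[OF i t1(1)] by (simp add: Y_def)
        moreover have "interim_util n F x p i (v, e) (w, e0) \<le> U w" unfolding U_def using BN t1 by blast
        ultimately show ?thesis using a by (simp add: algebra_simps)
      qed
      have sub': "\<And>v w e. v \<in> {vl i..vh i} \<Longrightarrow> w \<in> {vl i..vh i} \<Longrightarrow> e \<in> ?E \<Longrightarrow> U v + (w - v) * Y v e \<le> U w"
        using sub by blast
      have M1: "mono_on {vl i..vh i} (\<lambda>v. Y v e0)"
        and M2: "\<exists>C. countable C \<and> (\<forall>v\<in>{vl i..vh i} - C. \<forall>e\<in>?E. Y v e = Y v e0)"
        and M3: "\<And>v. v \<in> {vl i..vh i} \<Longrightarrow> U v = U (vl i) + integral {vl i..v} (\<lambda>v. Y v e0)"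
        using myerson_abstract[where a="vl i" and b="vh i" and Y=Y and U=U and E="?E", OF e0E sub'] by blast+
      show "\<exists>ytil Vtil.
          mono_on {vl i .. vh i} ytil \<and>
          (\<forall>v\<in>{vl i .. vh i}. 0 \<le> ytil v \<and> ytil v \<le> 1) \<and>
          (\<exists>C. countable C \<and>
             (\<forall>v\<in>{vl i .. vh i} - C. \<forall>eta\<in>Eta_set n el eh i. yexp n F x i (v, eta) = ytil v)) \<and>
          (\<forall>t\<in>type_set n vl vh el eh i. interim_util n F x p i t t = Vtil (fst t)) \<and>
          (\<forall>t\<in>type_set n vl vh el eh i.
             qexp n F p i t = fst t * yexp n F x i t - integral {vl i .. fst t} ytil
                              - eexp n F x i t - Vtil (vl i))"
      proof (rule exI[of _ "\<lambda>v. Y v e0"], rule exI[of _ U], intro conjI)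
        show "mono_on {vl i .. vh i} (\<lambda>v. Y v e0)" using M1 by blast
        show "\<forall>v\<in>{vl i .. vh i}. 0 \<le> Y v e0 \<and> Y v e0 \<le> 1"
          unfolding Y_def using yr[OF i] e0E memT by blast
        show "\<exists>C. countable C \<and> (\<forall>v\<in>{vl i .. vh i} - C. \<forall>eta\<in>Eta_set n el eh i. yexp n F x i (v, eta) = Y v e0)"
          using M2 unfolding Y_def by blast
        have W: "interim_util n F x p i t t = U (fst t)" if "t \<in> ?T" for t
        proof -
          obtain v e where t: "t = (v, e)" by (cases t)
          have "(v, e0) \<in> ?T" using that e0E memT t by auto
          from Wc[OF that this] show ?thesis unfolding U_def using t by simp
        qed
        then show "\<forall>t\<in>?T. interim_util n F x p i t t = U (fst t)" by blast
        show "\<forall>t\<in>?T. qexp n F p i t = fst t * yexp n F x i t - integral {vl i .. fst t} (\<lambda>v. Y v e0)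
                              - eexp n F x i t - U (vl i)"
        proof
        fix t assume t: "t \<in> ?T"
        then have fv: "fst t \<in> {vl i .. vh i}" by (auto simp: type_set_def)
        have "qexp n F p i t = fst t * yexp n F x i t - eexp n F x i t - interim_util n F x p i t t"
          using lin[OF i t, of t] by simp
        also have "interim_util n F x p i t t = U (vl i) + integral {vl i..fst t} (\<lambda>v. Y v e0)"
          using W[OF t] M3[OF fv] by simp
        finally show "qexp n F p i t = fst t * yexp n F x i t - integral {vl i .. fst t} (\<lambda>v. Y v e0)
                              - eexp n F x i t - U (vl i)" by simp
        qed
      qed
    qed
  }
  {
    assume h: "\<forall>i<n. \<exists>ytil C.
          mono_on {vl i .. vh i} ytil \<and>
          (\<forall>v\<in>{vl i .. vh i}. 0 \<le> ytil v \<and> ytil v \<le> 1) \<and>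
          (\<forall>t\<in>type_set n vl vh el eh i. yexp n F x i t = ytil (fst t)) \<and>
          (\<forall>t\<in>type_set n vl vh el eh i.
             qexp n F p i t = fst t * ytil (fst t) - integral {vl i .. fst t} ytil
                              - eexp n F x i t - C)"
    show "BNIC n vl vh el eh F x p"
      unfolding BNIC_def
    proof (intro ballI)
      fix i t th assume i': "i \<in> {..<n}" and t: "t \<in> type_set n vl vh el eh i" and th: "th \<in> type_set n vl vh el eh i"
      then have i: "i < n" by simp
      obtain g C where m: "mono_on {vl i .. vh i} g"
        and ye: "\<forall>t\<in>type_set n vl vh el eh i. yexp n F x i t = g (fst t)"
        and qe: "\<forall>t\<in>type_set n vl vh el eh i. qexp n F p i t = fst t * g (fst t) - integral {vl i .. fst t} g - eexp n F x i t - C"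
        using h i by blast
      define v where "v = fst t"
      define w where "w = fst th"
      have v: "v \<in> {vl i .. vh i}" and w: "w \<in> {vl i .. vh i}" using t th by (auto simp: type_set_def v_def w_def)
      have e1: "interim_util n F x p i th t = v * g w - w * g w + integral {vl i .. w} g + C"
        using lin[OF i th, of t] ye th qe by (simp add: v_def w_def)
      have e2: "interim_util n F x p i t t = integral {vl i .. v} g + C"
        using lin[OF i t, of t] ye t qe by (simp add: v_def)
      have key: "(v - w) * g w \<le> integral {vl i .. v} g - integral {vl i .. w} g"
      proof (cases "w \<le> v")
        case True
        then show ?thesis using mono_int_bounds(1)[OF m, of w v] v w by auto
      next
        case False
        then have "integral {vl i .. w} g - integral {vl i .. v} g \<le> (w - v) * g w"
          using mono_int_bounds(2)[OF m, of v w] v w by auto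
        then show ?thesis by (simp add: algebra_simps)
      qed
      show "interim_util n F x p i th t \<le> interim_util n F x p i t t"
        using e1 e2 key by (simp add: algebra_simps)
    qed
  }
qed

end
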